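(* Let $p$ be an odd prime and $a_1,a_2\in\mathbb{Z}_p^*$. If $a_1,a_2$ are either both quadratic residues modulo $p$ or both quadratic nonresidues modulo $p$, then $Q_{a_1,0}(\mathbb{Z}_p)\cong Q_{a_2,0}(\mathbb{Z}_p)$.
   Context: Identify $\mathbb{Z}_p$ with $\{0,\dots,p-1\}$. The overflow indicator is $(x,y)_p=1$ if $x+y\ge p$ as integers and $0$ otherwise. $Q_{a,b}(\mathbb{Z}_p)$ is $\mathbb{Z}_p^3$ with multiplication $(x_1,x_2,x_3)(y_1,y_2,y_3)=(x_1+y_1+(x_2+y_2)x_3y_3+a(x_2,y_2)_p+b(x_3,y_3)_p,\ x_2+y_2,\ x_3+y_3)$. *)

theory Defs
  imports "HOL-Number_Theory.Number_Theory"
begin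

text \<open>Z_p is identified with {0..<p} (natural numbers); all arithmetic is done mod p.\<close>

definition ovf :: "nat \<Rightarrow> nat \<Rightarrow> nat \<Rightarrow> nat" where
  "ovf p x y = (if x + y \<ge> p then 1 else 0)"

definition Qcarrier :: "nat \<Rightarrow> (nat \<times> nat \<times> nat) set" where
  "Qcarrier p = {0..<p} \<times> {0..<p} \<times> {0..<p}"

definition Qmult :: "nat \<Rightarrow> nat \<Rightarrow> nat \<Rightarrow> nat \<times> nat \<times> nat \<Rightarrow> nat \<times> nat \<times> nat \<Rightarrow> nat \<times> nat \<times> nat" where
  "Qmult p a b x y =
     (case x of (x1, x2, x3) \<Rightarrow> case y of (y1, y2, y3) \<Rightarrow>
       ((x1 + y1 + (x2 + y2) * x3 * y3 + a * ovf p x2 y2 + b * ovf p x3 y3) mod p,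
        (x2 + y2) mod p, (x3 + y3) mod p))"

definition Q_iso :: "nat \<Rightarrow> nat \<Rightarrow> nat \<Rightarrow> nat \<Rightarrow> nat \<Rightarrow> bool" where
  "Q_iso p a b c d \<longleftrightarrow> (\<exists>f. bij_betw f (Qcarrier p) (Qcarrier p) \<and>
     (\<forall>x\<in>Qcarrier p. \<forall>y\<in>Qcarrier p. f (Qmult p a b x y) = Qmult p c d (f x) (f y)))"

end

theory Submission
  imports Defs
begin

lemma qr_prod:
  fixes p :: nat and a1 a2 :: int
  assumes "prime p" "odd p" "\<not> [a1 = 0] (mod int p)" "\<not> [a2 = 0] (mod int p)"
    "QuadRes (int p) a1 \<longleftrightarrow> QuadRes (int p) a2"
  shows "QuadRes (int p) (a1 * a2)"
proof (cases "QuadRes (int p) a1")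
  case True
  then obtain y1 y2 where "[y1^2 = a1] (mod int p)" "[y2^2 = a2] (mod int p)"
    using assms(5) unfolding QuadRes_def by blast
  then have "[(y1*y2)^2 = a1*a2] (mod int p)"
    by (metis cong_mult power_mult_distrib)
  then show ?thesis unfolding QuadRes_def by blast
next
  case False
  have p2: "2 < p" using assms(1,2) prime_ge_2_nat[OF assms(1)]
    by (metis dvd_refl le_neq_implies_less)
  have pp: "prime (int p)" using assms(1) by simp
  have L1: "Legendre a1 (int p) = -1" using False assms(3) unfolding Legendre_def by simp
  have L2: "Legendre a2 (int p) = -1" using False assms(3,4,5) unfolding Legendre_def by simp
  have e1: "[-1 = a1 ^ ((p - 1) div 2)] (mod int p)"
    using euler_criterion[OF assms(1) p2, of a1] L1 by simp
  have e2: "[-1 = a2 ^ ((p - 1) div 2)] (mod int p)"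
    using euler_criterion[OF assms(1) p2, of a2] L2 by simp
  have "[(-1)*(-1) = (a1*a2) ^ ((p - 1) div 2)] (mod int p)"
    using cong_mult[OF e1 e2] by (simp add: power_mult_distrib)
  then have e: "[1 = (a1*a2) ^ ((p - 1) div 2)] (mod int p)" by simp
  have L: "[Legendre (a1*a2) (int p) = 1] (mod int p)"
    using euler_criterion[OF assms(1) p2, of "a1*a2"] e by (meson cong_sym cong_trans)
  have nz: "\<not> [a1*a2 = 0] (mod int p)"
    using assms(3,4) pp by (simp add: cong_0_iff prime_dvd_mult_iff)
  show ?thesis
  proof (rule ccontr)
    assume "\<not> ?thesis"
    then have "Legendre (a1*a2) (int p) = -1" using nz unfolding Legendre_def by simp
    with L have "[-1 = 1] (mod int p)" by simp
    then have "int p dvd 2" by (simp add: cong_iff_dvd_diff)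
    then have "p dvd 2" by presburger
    then show False using dvd_imp_le[of p 2] p2 by simp
  qed
qed


lemma exists_s:
  fixes p a1 a2 :: nat
  assumes "prime p" and "odd p"
    and "a1 \<in> {1..<p}" and "a2 \<in> {1..<p}"
    and "QuadRes (int p) (int a1) \<longleftrightarrow> QuadRes (int p) (int a2)"
  shows "\<exists>s. [s^2 * a1 = a2] (mod p) \<and> coprime s p"
proof -
  have pp: "prime (int p)" using assms(1) by simp
  have n1: "\<not> [int a1 = 0] (mod int p)" using assms(3)
    by (auto simp add: cong_0_iff dest: nat_dvd_not_less)
  have n2: "\<not> [int a2 = 0] (mod int p)" using assms(4)
    by (auto simp add: cong_0_iff dest: nat_dvd_not_less)
  obtain y where y: "[y^2 = int a1 * int a2] (mod int p)"
    using qr_prod[OF assms(1,2) n1 n2 assms(5)] unfolding QuadRes_def by blast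
  have "coprime (int a1) (int p)" using n1 pp
    by (metis cong_0_iff coprime_commute prime_imp_coprime)
  then obtain b where b: "[int a1 * b = 1] (mod int p)" using cong_solve_coprime_int by blast
  define s0 where "s0 = y * b"
  have "[s0^2 * int a1 = y^2 * (b^2 * int a1)] (mod int p)" by (simp add: s0_def power_mult_distrib mult.assoc)
  moreover have "[y^2 * (b^2 * int a1) = (int a1 * int a2) * (b^2 * int a1)] (mod int p)"
    using y cong_mult cong_refl by blast
  moreover have "(int a1 * int a2) * (b^2 * int a1) = int a2 * (int a1 * b)^2"
    by (simp add: power2_eq_square algebra_simps)
  moreover have "[int a2 * (int a1 * b)^2 = int a2 * 1^2] (mod int p)"
    using b by (intro cong_mult cong_pow cong_refl)
  ultimately have s0: "[s0^2 * int a1 = int a2] (mod int p)"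
    by (metis (no_types, lifting) cong_trans mult.right_neutral power_one)
  define s where "s = nat (s0 mod int p)"
  have ise: "int s = s0 mod int p" using s_def prime_gt_0_nat[OF assms(1)]
    by simp
  have "[int s ^2 * int a1 = s0^2 * int a1] (mod int p)"
    unfolding ise by (intro cong_mult cong_pow cong_refl) (simp add: cong_def)
  then have "[int (s^2 * a1) = int a2] (mod int p)" using s0 cong_trans by simp
  then have c: "[s^2 * a1 = a2] (mod p)" using cong_int_iff by blast
  have "coprime s p"
  proof (rule ccontr)
    assume "\<not> coprime s p"
    then have "p dvd s" using assms(1) by (metis coprime_commute prime_imp_coprime)
    then have "p dvd s^2 * a1" by (simp add: power2_eq_square)
    then have "p dvd a2" using c by (metis cong_dvd_iff)
    then show False using assms(4) n2 by (simp add: cong_0_iff flip: of_nat_dvd_iff)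
  qed
  then show ?thesis using c by blast
qed

theorem lemma5p7:
  fixes p a1 a2 :: nat
  assumes "prime p" and "odd p"
    and "a1 \<in> {1..<p}" and "a2 \<in> {1..<p}"
    and "QuadRes (int p) (int a1) \<longleftrightarrow> QuadRes (int p) (int a2)"
  shows "Q_iso p a1 0 a2 0"
proof -
  obtain s where c: "[s^2 * a1 = a2] (mod p)" and cop: "coprime s p"
    using exists_s[OF assms] by blast
  have p0: "p > 0" using assms(1) prime_gt_0_nat by blast
  have cop2: "coprime (s^2) p" using cop by simp
  define f where "f = (\<lambda>(x1::nat, x2::nat, x3::nat). (s^2 * x1 mod p, x2, s * x3 mod p))"
  have sub: "f ` Qcarrier p \<subseteq> Qcarrier p"
    using p0 by (auto simp: f_def Qcarrier_def)
  have inj: "inj_on f (Qcarrier p)"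
  proof (rule inj_onI)
    fix x y assume x: "x \<in> Qcarrier p" and y: "y \<in> Qcarrier p" and e: "f x = f y"
    obtain x1 x2 x3 where xe: "x = (x1, x2, x3)" by (cases x) auto
    obtain y1 y2 y3 where ye: "y = (y1, y2, y3)" by (cases y) auto
    have e1: "[x1 * s^2 = y1 * s^2] (mod p)" using e by (simp add: xe ye f_def cong_def mult.commute)
    have e3: "[x3 * s = y3 * s] (mod p)" using e by (simp add: xe ye f_def cong_def mult.commute)
    have "x1 = y1" using e1 cop2 x y xe ye
      by (metis cong_less_modulus_unique_nat cong_mult_rcancel_nat Qcarrier_def mem_Sigma_iff atLeastLessThan_iff)
    moreover have "x3 = y3" using e3 cop x y xe ye
      by (metis cong_less_modulus_unique_nat cong_mult_rcancel_nat Qcarrier_def mem_Sigma_iff atLeastLessThan_iff)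
    moreover have "x2 = y2" using e by (simp add: xe ye f_def)
    ultimately show "x = y" using xe ye by simp
  qed
  have fin: "finite (Qcarrier p)" by (simp add: Qcarrier_def)
  have bij: "bij_betw f (Qcarrier p) (Qcarrier p)"
    using endo_inj_surj[OF fin sub inj] inj by (simp add: bij_betw_def)
  have hom: "f (Qmult p a1 0 x y) = Qmult p a2 0 (f x) (f y)"
    if x: "x \<in> Qcarrier p" and y: "y \<in> Qcarrier p" for x y
  proof -
    obtain x1 x2 x3 where xe: "x = (x1, x2, x3)" by (cases x) auto
    obtain y1 y2 y3 where ye: "y = (y1, y2, y3)" by (cases y) auto
    define c0 where "c0 = ovf p x2 y2"
    have "[s^2 * a1 * c0 = a2 * c0] (mod p)" using c by (intro cong_mult cong_refl)
    then have "[s^2 * x1 + s^2 * y1 + (x2 + y2) * (s * x3) * (s * y3) + s^2 * a1 * c0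
             = s^2 * x1 + s^2 * y1 + (x2 + y2) * (s * x3) * (s * y3) + a2 * c0] (mod p)"
      by (intro cong_add cong_refl)
    then have "(s^2 * x1 + s^2 * y1 + (x2 + y2) * (s * x3) * (s * y3) + s^2 * a1 * c0) mod p
             = (s^2 * x1 + s^2 * y1 + (x2 + y2) * (s * x3) * (s * y3) + a2 * c0) mod p"
      by (simp add: cong_def)
    moreover have "s^2 * ((x1 + y1 + (x2 + y2) * x3 * y3 + a1 * c0) mod p) mod p
       = (s^2 * x1 + s^2 * y1 + (x2 + y2) * (s * x3) * (s * y3) + s^2 * a1 * c0) mod p"
      by (subst mod_mult_right_eq) (simp add: power2_eq_square algebra_simps)
    moreover have "(s^2 * x1 mod p + s^2 * y1 mod p + (x2 + y2) * (s * x3 mod p) * (s * y3 mod p) + a2 * c0) mod p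
       = (s^2 * x1 + s^2 * y1 + (x2 + y2) * (s * x3) * (s * y3) + a2 * c0) mod p"
    proof -
      have "[s^2 * x1 mod p + s^2 * y1 mod p + (x2 + y2) * (s * x3 mod p) * (s * y3 mod p) + a2 * c0
          = s^2 * x1 + s^2 * y1 + (x2 + y2) * (s * x3) * (s * y3) + a2 * c0] (mod p)"
        by (intro cong_add cong_mult cong_refl) (simp_all add: cong_def)
      then show ?thesis by (simp add: cong_def)
    qed
    moreover have "s * ((x3 + y3) mod p) mod p = (s * x3 mod p + s * y3 mod p) mod p"
      by (simp add: mod_simps algebra_simps)
    ultimately show ?thesis
      by (simp add: xe ye f_def Qmult_def c0_def)
  qed
  show ?thesis unfolding Q_iso_def using bij hom by blast
qed

end
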